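(* Fix any total budget $\mathrm{TB}\in\mathbb N_0$ and let $k\in\mathbb N$. Then the disjunctive sum $1/2^k+\overline{1/2^k}=0$.
   Context: Game forms are defined recursively: $G=\{G^{\mathcal L}\mid G^{\mathcal R}\}$ with finite sets of Left and Right options, and finite birthday. $0=\{\varnothing\mid\varnothing\}$, $1=\{0\mid\varnothing\}$. Dyadic game forms: $1/2^0=1$ and for $k\in\mathbb N$, $1/2^k=\{0\mid 1/2^{k-1}\}$. The conjugate is $\bar G=\{\overline{G^{\mathcal R}}\mid\overline{G^{\mathcal L}}\}$. The budget set for total budget $\mathrm{TB}$ is $\mathcal B=\{0,\dots,\mathrm{TB},\hat 0,\dots,\widehat{\mathrm{TB}}\}$: state $p$ (resp. $\hat p$) means Left holds $p$ dollars and Right holds $\mathrm{TB}-p$, and Right (resp. Left) holds the tie-breaking marker. Play of $(G,\tilde p)$: at every position (terminal ones included) both players bid simultaneously, Left $\ell\in\{0,\dots,p\}$, Right $r\in\{0,\dots,\mathrm{TB}-p\}$. If Left holds the marker (state $\hat p$): if $\ell>r$ Left moves to $(G^L,\widehat{p-\ell})$, or, including the marker (allowed when $\ell\ge r$), to $(G^L,p-\ell)$; if $\ell=r$ Left wins, the marker passes to Right, play continues at $(G^L,p-\ell)$; if $\ell<r$ Right moves to $(G^R,\widehat{p+r})$. Symmetrically when Right holds the marker (state $p$): if $r>\ell$ Right moves to $(G^R,p+r)$ or, including the marker, to $(G^R,\widehat{p+r})$; if $r=\ell$ Right wins, the marker passes to Left, play continues at $(G^R,\widehat{p+r})$; if $r<\ell$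 Left moves to $(G^L,p-\ell)$. A player who wins a bid but has no option loses. $o(G,\tilde p)\in\{\mathrm L,\mathrm R\}$ is the winner under optimal play; $\mathrm L>\mathrm R$. Disjunctive sum $G+H=\{G^{\mathcal L}+H,G+H^{\mathcal L}\mid G^{\mathcal R}+H,G+H^{\mathcal R}\}$. $G\ge H$ means $o(G+X,\tilde p)\ge o(H+X,\tilde p)$ for all game forms $X$ and all $\tilde p\in\mathcal B$; $G=H$ means $G\ge H$ and $H\ge G$. *)

theory Defs
  imports Main "HOL-Library.FSet"
begin

datatype game = Game (lopts: "game fset") (ropts: "game fset")

definition g_zero :: game where "g_zero = Game {||} {||}"
definition g_one :: game where "g_one = Game {|g_zero|} {||}"

text \<open>Dyadic game forms: dyadic k = 1/2^k.\<close>
primrec dyadic :: "nat \<Rightarrow> game" where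
  "dyadic 0 = g_one"
| "dyadic (Suc k) = Game {|g_zero|} {|dyadic k|}"

primrec conjugate :: "game \<Rightarrow> game" where
  "conjugate (Game GL GR) = Game (conjugate |`| GR) (conjugate |`| GL)"

lemma game_size_lopt: "g |\<in>| GL \<Longrightarrow> size g < size (Game GL GR)"
  by (induction GL) (auto simp: size_fset_overloaded_simps)

lemma game_size_ropt: "g |\<in>| GR \<Longrightarrow> size g < size (Game GL GR)"
  by (induction GR) (auto simp: size_fset_overloaded_simps)

declare fimage_cong[fundef_cong]

function gsum :: "game \<Rightarrow> game \<Rightarrow> game" where
  "gsum (Game GL GR) (Game HL HR) =
     Game ((\<lambda>g. gsum g (Game HL HR)) |`| GL |\<union>| (\<lambda>h. gsum (Game GL GR) h) |`| HL)
          ((\<lambda>g. gsum g (Game HL HR)) |`| GR |\<union>| (\<lambda>h. gsum (Game GL GR) h) |`| HR)"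
  by pat_completeness auto
termination
  by (relation "measure (\<lambda>(g, h). size g + size h)")
     (auto dest: game_size_lopt game_size_ropt)

text \<open>Budget states: \<open>Plain p\<close> is the state p (Left holds p dollars, Right holds TB - p,
  Right holds the tie-breaking marker); \<open>Hat p\<close> is the state p-hat (Left holds the marker).\<close>
datatype bstate = Plain nat | Hat nat

definition budget_set :: "nat \<Rightarrow> bstate set" where
  "budget_set TB = {Plain p | p. p \<le> TB} \<union> {Hat p | p. p \<le> TB}"

fun money :: "bstate \<Rightarrow> nat" where
  "money (Plain p) = p"
| "money (Hat p) = p"

fun left_wins_bid :: "bstate \<Rightarrow> nat \<Rightarrow> nat \<Rightarrow> bool" where
  "left_wins_bid (Hat p) l r = (r \<le> l)"
| "left_wins_bid (Plain p) l r = (r < l)"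

fun left_targets :: "bstate \<Rightarrow> nat \<Rightarrow> nat \<Rightarrow> bstate set" where
  "left_targets (Hat p) l r = (if r < l then {Hat (p - l), Plain (p - l)} else {Plain (p - l)})"
| "left_targets (Plain p) l r = {Plain (p - l)}"

fun right_targets :: "bstate \<Rightarrow> nat \<Rightarrow> nat \<Rightarrow> bstate set" where
  "right_targets (Hat p) l r = {Hat (p + r)}"
| "right_targets (Plain p) l r = (if l < r then {Plain (p + r), Hat (p + r)} else {Hat (p + r)})"

inductive lwin :: "nat \<Rightarrow> game \<Rightarrow> bstate \<Rightarrow> bool" for TB :: nat where
  "\<lbrakk> l \<le> money s;
     \<forall>r. r \<le> TB - money s \<longrightarrow>
        (left_wins_bid s l r \<longrightarrow> (\<exists>g\<in>fset GL. \<exists>s'\<in>left_targets s l r. lwin TB g s')) \<and>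
        (\<not> left_wins_bid s l r \<longrightarrow> (\<forall>g\<in>fset GR. \<forall>s'\<in>right_targets s l r. lwin TB g s')) \<rbrakk>
   \<Longrightarrow> lwin TB (Game GL GR) s"

datatype outcome = OR | OL

definition outcome :: "nat \<Rightarrow> game \<Rightarrow> bstate \<Rightarrow> outcome" where
  "outcome TB G s = (if lwin TB G s then OL else OR)"

definition outcome_ge :: "outcome \<Rightarrow> outcome \<Rightarrow> bool" where
  "outcome_ge a b \<longleftrightarrow> (a = b \<or> (a = OL \<and> b = OR))"

definition game_ge :: "nat \<Rightarrow> game \<Rightarrow> game \<Rightarrow> bool" where
  "game_ge TB G H \<longleftrightarrow>
     (\<forall>X. \<forall>s\<in>budget_set TB. outcome_ge (outcome TB (gsum G X) s) (outcome TB (gsum H X) s))"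

definition game_eq :: "nat \<Rightarrow> game \<Rightarrow> game \<Rightarrow> bool" where
  "game_eq TB G H \<longleftrightarrow> game_ge TB G H \<and> game_ge TB H G"

end

theory Submission
  imports Defs
begin

lemma gsum_eq: "gsum G H = Game ((\<lambda>g. gsum g H) |`| lopts G |\<union>| gsum G |`| lopts H)
          ((\<lambda>g. gsum g H) |`| ropts G |\<union>| gsum G |`| ropts H)"
  by (cases G; cases H) simp

lemma lopts_gsum: "g |\<in>| lopts (gsum G H) \<longleftrightarrow> (\<exists>h. h |\<in>| lopts G \<and> g = gsum h H) \<or> (\<exists>x. x |\<in>| lopts H \<and> g = gsum G x)"
  by (subst gsum_eq) auto

lemma ropts_gsum: "g |\<in>| ropts (gsum G H) \<longleftrightarrow> (\<exists>h. h |\<in>| ropts G \<and> g = gsum h H) \<or> (\<exists>x. x |\<in>| ropts H \<and> g = gsum G x)"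
  by (subst gsum_eq) auto

lemma lwin_char: "lwin TB G s \<longleftrightarrow> (\<exists>l\<le>money s. \<forall>r\<le>TB - money s.
        (left_wins_bid s l r \<longrightarrow> (\<exists>g|\<in>|lopts G. \<exists>s'\<in>left_targets s l r. lwin TB g s')) \<and>
        (\<not> left_wins_bid s l r \<longrightarrow> (\<forall>g|\<in>|ropts G. \<forall>s'\<in>right_targets s l r. lwin TB g s')))"
  by (cases G) (subst lwin.simps, auto)

lemma gsum_zero_left: "gsum g_zero H = H"
proof (induction H rule: game.induct)
  case (Game HL HR)
  have "gsum g_zero |`| HL = HL" using Game(1) by (metis fimage_cong fimage_ident id_apply)
  moreover have "gsum g_zero |`| HR = HR" using Game(2) by (metis fimage_cong fimage_ident id_apply)
  ultimately show ?case by (simp add: g_zero_def)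
qed

lemma gsum_zero_right: "gsum H g_zero = H"
proof (induction H rule: game.induct)
  case (Game HL HR)
  have "(\<lambda>g. gsum g g_zero) |`| HL = HL" using Game(1) by (metis fimage_cong fimage_ident id_apply)
  moreover have "(\<lambda>g. gsum g g_zero) |`| HR = HR" using Game(2) by (metis fimage_cong fimage_ident id_apply)
  ultimately show ?case by (simp add: g_zero_def)
qed

lemma conj_zero[simp]: "conjugate g_zero = g_zero" by (simp add: g_zero_def)

lemma dy_opts: "lopts (dyadic 0) = {|g_zero|}" "ropts (dyadic 0) = {||}"
  "lopts (dyadic (Suc k)) = {|g_zero|}" "ropts (dyadic (Suc k)) = {|dyadic k|}"
  by (simp_all add: g_one_def)

lemma cdy_opts: "lopts (conjugate (dyadic 0)) = {||}" "ropts (conjugate (dyadic 0)) = {|g_zero|}"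
  "lopts (conjugate (dyadic (Suc k))) = {|conjugate (dyadic k)|}" "ropts (conjugate (dyadic (Suc k))) = {|g_zero|}"
  by (simp_all add: g_one_def conj_zero)

lemma one_opts[simp]: "lopts g_one = {|g_zero|}" "ropts g_one = {||}"
  "lopts (conjugate g_one) = {||}" "ropts (conjugate g_one) = {|g_zero|}"
  by (simp_all add: g_one_def conj_zero)

fun le_st :: "bstate \<Rightarrow> bstate \<Rightarrow> bool" where
  "le_st (Plain p) (Plain q) = (p \<le> q)"
| "le_st (Hat p) (Hat q) = (p \<le> q)"
| "le_st (Plain p) (Hat q) = (p \<le> q)"
| "le_st (Hat p) (Plain q) = False"

fun sk :: "bstate \<Rightarrow> bstate \<Rightarrow> bool" where
  "sk (Plain p) (Plain q) = (p \<le> q)"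
| "sk (Hat p) (Hat q) = (p \<le> q)"
| "sk (Plain p) (Hat q) = False"
| "sk (Hat p) (Plain q) = False"

abbreviation lwb where "lwb \<equiv> left_wins_bid"
abbreviation lt where "lt \<equiv> left_targets"
abbreviation rt where "rt \<equiv> right_targets"

lemma le_refl: "le_st s s" by (cases s) auto
lemma sk_imp: "sk s t \<Longrightarrow> le_st s t" by (cases s; cases t) auto
lemma money_le: "le_st s t \<Longrightarrow> money s \<le> money t" by (cases s; cases t) auto
lemma lwb_mono: "le_st s t \<Longrightarrow> lwb s l r \<Longrightarrow> lwb t l r" by (cases s; cases t) auto
lemma sk_lwb: "sk s t \<Longrightarrow> lwb t l r = lwb s l r" by (cases s; cases t) auto
lemma T2: "sk s t \<Longrightarrow> s' \<in> lt s l r \<Longrightarrow> \<exists>t'\<in>lt t l r. sk s' t'"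
  by (cases s; cases t) (auto split: if_splits)
lemma T3: "sk s t \<Longrightarrow> t' \<in> rt t l r \<Longrightarrow> \<exists>s'\<in>rt s l r. sk s' t'"
  by (cases s; cases t) (auto split: if_splits)
lemma T2c: "le_st s t \<Longrightarrow> lwb s l r \<Longrightarrow> s' \<in> lt s l r \<Longrightarrow> \<exists>t'\<in>lt t l r. le_st s' t'"
  by (cases s; cases t) (auto split: if_splits)
lemma T3c: "le_st s t \<Longrightarrow> \<not> lwb t l r \<Longrightarrow> t' \<in> rt t l r \<Longrightarrow> \<exists>s'\<in>rt s l r. le_st s' t'"
  by (cases s; cases t) (auto split: if_splits)
lemma R1: "le_st s t \<Longrightarrow> t' \<in> rt t l r \<Longrightarrow> le_st s t'"
  by (cases s; cases t) (auto split: if_splits)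
lemma tieC: "le_st s t \<Longrightarrow> lwb t l r \<Longrightarrow> \<not> lwb s l r \<Longrightarrow> \<exists>p q. s = Plain p \<and> t = Hat q \<and> r = l \<and> p \<le> q"
  by (cases s; cases t) auto
lemma T2d: "le_st t s \<Longrightarrow> lwb t l r \<Longrightarrow> t' \<in> lt t l r \<Longrightarrow> \<exists>s'\<in>lt s l r. le_st t' s'"
  by (cases s; cases t) (auto split: if_splits)
lemma L1: "le_st t s \<Longrightarrow> t' \<in> lt t l r \<Longrightarrow> le_st t' s"
  by (cases s; cases t) (auto split: if_splits)
lemma T3d: "le_st t s \<Longrightarrow> \<not> lwb s l r \<Longrightarrow> s' \<in> rt s l r \<Longrightarrow> \<exists>t'\<in>rt t l r. le_st t' s'"
  by (cases s; cases t) (auto split: if_splits)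
lemma tieD: "le_st t s \<Longrightarrow> lwb s l r \<Longrightarrow> \<not> lwb t l r \<Longrightarrow> \<exists>p q. t = Plain q \<and> s = Hat p \<and> r = l \<and> q \<le> p"
  by (cases s; cases t) auto


lemma lwin_M: "lwin TB X s \<Longrightarrow> sk s t \<Longrightarrow> lwin TB X t"
proof (induction X arbitrary: s t rule: game.induct)
  case (Game XL XR)
  from Game.prems(1)[unfolded lwin_char[of TB "Game XL XR" s]] obtain l where l: "l \<le> money s" and S: "\<forall>r\<le>TB - money s.
        (lwb s l r \<longrightarrow> (\<exists>g|\<in>|XL. \<exists>s'\<in>lt s l r. lwin TB g s')) \<and>
        (\<not> lwb s l r \<longrightarrow> (\<forall>g|\<in>|XR. \<forall>s'\<in>rt s l r. lwin TB g s'))"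
    by auto
  have mm: "money s \<le> money t" using money_le sk_imp Game.prems(2) by blast
  have "\<forall>r\<le>TB - money t.
        (lwb t l r \<longrightarrow> (\<exists>g|\<in>|XL. \<exists>t'\<in>lt t l r. lwin TB g t')) \<and>
        (\<not> lwb t l r \<longrightarrow> (\<forall>g|\<in>|XR. \<forall>t'\<in>rt t l r. lwin TB g t'))"
  proof (intro allI impI conjI)
    fix r assume r: "r \<le> TB - money t"
    hence rs: "r \<le> TB - money s" using mm by linarith
    have eq: "lwb t l r = lwb s l r" using sk_lwb Game.prems(2) by blast
    { assume "lwb t l r"
      then obtain g s' where g: "g |\<in>| XL" "s' \<in> lt s l r" "lwin TB g s'" using S rs eq by blast
      then obtain t' where "t' \<in> lt t l r" "sk s' t'" using T2 Game.prems(2) by blast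
      then show "\<exists>g|\<in>|XL. \<exists>t'\<in>lt t l r. lwin TB g t'" using Game.IH(1) g by blast }
    { assume "\<not> lwb t l r"
      show "\<forall>g|\<in>|XR. \<forall>t'\<in>rt t l r. lwin TB g t'"
      proof (intro ballI)
        fix g t' assume g: "g |\<in>| XR" and t': "t' \<in> rt t l r"
        then obtain s' where "s' \<in> rt s l r" "sk s' t'" using T3 Game.prems(2) by blast
        moreover have "\<forall>s'\<in>rt s l r. lwin TB g s'" using S rs eq \<open>\<not> lwb t l r\<close> g by blast
        ultimately show "lwin TB g t'" using Game.IH(2) g by blast
      qed }
  qed
  moreover have "l \<le> money t" using l mm by simp
  ultimately show ?case unfolding lwin_char[of TB "Game XL XR" t] game.sel by blast
qed

definition ge0 where "ge0 TB H \<longleftrightarrow> (\<forall>X s. lwin TB X s \<longrightarrow> lwin TB (gsum H X) s)"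
definition pos where "pos TB H \<longleftrightarrow> (\<forall>X s t. lwin TB X s \<longrightarrow> le_st s t \<longrightarrow> lwin TB (gsum H X) t)"
definition le0 where "le0 TB H \<longleftrightarrow> (\<forall>X s. lwin TB (gsum H X) s \<longrightarrow> lwin TB X s)"
definition negv where "negv TB H \<longleftrightarrow> (\<forall>X s t. lwin TB (gsum H X) t \<longrightarrow> le_st t s \<longrightarrow> lwin TB X s)"

lemma pos_ge0: "pos TB H \<Longrightarrow> ge0 TB H" unfolding pos_def ge0_def using le_refl by blast
lemma negv_le0: "negv TB H \<Longrightarrow> le0 TB H" unfolding negv_def le0_def using le_refl by blast
lemma ge0_zero: "ge0 TB g_zero" unfolding ge0_def by (simp add: gsum_zero_left)
lemma le0_zero: "le0 TB g_zero" unfolding le0_def by (simp add: gsum_zero_left)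

lemma lemC:
  assumes tPL: "PL |\<in>| lopts P" and tge: "ge0 TB PL" and R: "\<forall>g|\<in>|ropts P. pos TB g"
  shows "pos TB P"
proof -
  have "lwin TB X s \<Longrightarrow> le_st s t \<Longrightarrow> lwin TB (gsum P X) t" for X s t
  proof (induction X arbitrary: s t rule: game.induct)
    case (Game XL XR)
    from Game.prems(1)[unfolded lwin_char[of TB "Game XL XR" s]] obtain l where l: "l \<le> money s" and S: "\<forall>r\<le>TB - money s.
          (lwb s l r \<longrightarrow> (\<exists>g|\<in>|XL. \<exists>s'\<in>lt s l r. lwin TB g s')) \<and>
          (\<not> lwb s l r \<longrightarrow> (\<forall>g|\<in>|XR. \<forall>s'\<in>rt s l r. lwin TB g s'))"
      by auto
    have mm: "money s \<le> money t" using money_le Game.prems(2) by blast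
    let ?X = "Game XL XR"
    have "\<forall>r\<le>TB - money t.
          (lwb t l r \<longrightarrow> (\<exists>g|\<in>|lopts (gsum P ?X). \<exists>t'\<in>lt t l r. lwin TB g t')) \<and>
          (\<not> lwb t l r \<longrightarrow> (\<forall>g|\<in>|ropts (gsum P ?X). \<forall>t'\<in>rt t l r. lwin TB g t'))"
    proof (intro allI impI conjI)
      fix r assume r: "r \<le> TB - money t"
      hence rs: "r \<le> TB - money s" using mm by linarith
      { assume lt: "lwb t l r"
        show "\<exists>g|\<in>|lopts (gsum P ?X). \<exists>t'\<in>lt t l r. lwin TB g t'"
        proof (cases "lwb s l r")
          case True
          then obtain g s' where g: "g |\<in>| XL" "s' \<in> lt s l r" "lwin TB g s'" using S rs by blast
          then obtain t' where "t' \<in> lt t l r" "le_st s' t'" using T2c Game.prems(2) True by blast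
          moreover have "lwin TB (gsum P g) t'" using Game.IH(1) g calculation by blast
          moreover have "gsum P g |\<in>| lopts (gsum P ?X)" using g lopts_gsum by auto
          ultimately show ?thesis by blast
        next
          case False
          then obtain p q where pq: "s = Plain p" "t = Hat q" "r = l" "p \<le> q"
            using tieC Game.prems(2) lt by blast
          show ?thesis
          proof (cases "l = 0")
            case True
            have "lwin TB ?X (Plain q)" using lwin_M Game.prems(1) pq by fastforce
            then have "lwin TB (gsum PL ?X) (Plain q)" using tge unfolding ge0_def by blast
            moreover have "gsum PL ?X |\<in>| lopts (gsum P ?X)" using tPL lopts_gsum by auto
            moreover have "Plain q \<in> lt t l r" using pq True by simp
            ultimately show ?thesis by blast
          next
            case False
            have "l - 1 \<le> TB - money s" using rs pq by simp
            moreover have "lwb s l (l - 1)" using pq False by simp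
            ultimately obtain g s' where g: "g |\<in>| XL" "s' \<in> lt s l (l - 1)" "lwin TB g s'" using S by blast
            have "s' = Plain (p - l)" using g pq by simp
            then have "le_st s' (Plain (q - l))" using pq by simp
            then have "lwin TB (gsum P g) (Plain (q - l))" using Game.IH(1) g by blast
            moreover have "gsum P g |\<in>| lopts (gsum P ?X)" using g lopts_gsum by auto
            moreover have "Plain (q - l) \<in> lt t l r" using pq by simp
            ultimately show ?thesis by blast
          qed
        qed }
      { assume nlt: "\<not> lwb t l r"
        hence nls: "\<not> lwb s l r" using lwb_mono Game.prems(2) by blast
        show "\<forall>g|\<in>|ropts (gsum P ?X). \<forall>t'\<in>rt t l r. lwin TB g t'"
        proof (intro ballI)
          fix g t' assume g: "g |\<in>| ropts (gsum P ?X)" and t': "t' \<in> rt t l r"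
          from g consider (a) h where "h |\<in>| ropts P" "g = gsum h ?X" | (b) x where "x |\<in>| XR" "g = gsum P x"
            using ropts_gsum by auto
          then show "lwin TB g t'"
          proof cases
            case a
            have "le_st s t'" using R1 Game.prems(2) t' by blast
            then show ?thesis using a R Game.prems(1) unfolding pos_def by blast
          next
            case b
            obtain s' where s': "s' \<in> rt s l r" "le_st s' t'" using T3c Game.prems(2) nlt t' by blast
            have "lwin TB x s'" using S rs nls b s' by blast
            then show ?thesis using Game.IH(2) b s' by blast
          qed
        qed }
    qed
    moreover have "l \<le> money t" using l mm by simp
  ultimately show ?case unfolding lwin_char[of TB "gsum P ?X" t] by blast
  qed
  then show ?thesis unfolding pos_def by blast
qed


lemma lemA:
  assumes R: "\<forall>g|\<in>|ropts P. pos TB g"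
  shows "ge0 TB P"
proof -
  have "lwin TB X s \<Longrightarrow> lwin TB (gsum P X) s" for X s
  proof (induction X arbitrary: s rule: game.induct)
    case (Game XL XR)
    from Game.prems(1)[unfolded lwin_char[of TB "Game XL XR" s]] obtain l where l: "l \<le> money s" and S: "\<forall>r\<le>TB - money s.
          (lwb s l r \<longrightarrow> (\<exists>g|\<in>|XL. \<exists>s'\<in>lt s l r. lwin TB g s')) \<and>
          (\<not> lwb s l r \<longrightarrow> (\<forall>g|\<in>|XR. \<forall>s'\<in>rt s l r. lwin TB g s'))"
      by auto
    let ?X = "Game XL XR"
    have "\<forall>r\<le>TB - money s.
          (lwb s l r \<longrightarrow> (\<exists>g|\<in>|lopts (gsum P ?X). \<exists>t'\<in>lt s l r. lwin TB g t')) \<and>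
          (\<not> lwb s l r \<longrightarrow> (\<forall>g|\<in>|ropts (gsum P ?X). \<forall>t'\<in>rt s l r. lwin TB g t'))"
    proof (intro allI impI conjI)
      fix r assume rs: "r \<le> TB - money s"
      { assume lt: "lwb s l r"
        then obtain g s' where g: "g |\<in>| XL" "s' \<in> lt s l r" "lwin TB g s'" using S rs by blast
        moreover have "lwin TB (gsum P g) s'" using Game.IH(1) g by blast
        moreover have "gsum P g |\<in>| lopts (gsum P ?X)" using g lopts_gsum by auto
        ultimately show "\<exists>g|\<in>|lopts (gsum P ?X). \<exists>t'\<in>lt s l r. lwin TB g t'" by blast }
      { assume nls: "\<not> lwb s l r"
        show "\<forall>g|\<in>|ropts (gsum P ?X). \<forall>t'\<in>rt s l r. lwin TB g t'"
        proof (intro ballI)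
          fix g t' assume g: "g |\<in>| ropts (gsum P ?X)" and t': "t' \<in> rt s l r"
          from g consider (a) h where "h |\<in>| ropts P" "g = gsum h ?X" | (b) x where "x |\<in>| XR" "g = gsum P x"
            using ropts_gsum by auto
          then show "lwin TB g t'"
          proof cases
            case a
            have "le_st s t'" using R1 le_refl t' by blast
            then show ?thesis using a R Game.prems(1) unfolding pos_def by blast
          next
            case b
            have "lwin TB x t'" using S rs nls b t' by blast
            then show ?thesis using Game.IH(2) b by blast
          qed
        qed }
    qed
    then show ?case using l unfolding lwin_char[of TB "gsum P ?X" s] by blast
  qed
  then show ?thesis unfolding ge0_def by blast
qed

lemma lemB:
  assumes L: "\<forall>g|\<in>|lopts P. negv TB g"
  shows "le0 TB P"
proof -
  have "lwin TB (gsum P X) s \<Longrightarrow> lwin TB X s" for X s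
  proof (induction X arbitrary: s rule: game.induct)
    case (Game XL XR)
    let ?X = "Game XL XR"
    from Game.prems(1)[unfolded lwin_char[of TB "gsum P ?X" s]] obtain l where l: "l \<le> money s" and SH: "\<forall>r\<le>TB - money s.
          (lwb s l r \<longrightarrow> (\<exists>g|\<in>|lopts (gsum P ?X). \<exists>s'\<in>lt s l r. lwin TB g s')) \<and>
          (\<not> lwb s l r \<longrightarrow> (\<forall>g|\<in>|ropts (gsum P ?X). \<forall>s'\<in>rt s l r. lwin TB g s'))"
      by blast
    show ?case
    proof (rule ccontr)
      assume N: "\<not> lwin TB ?X s"
      obtain r where rs: "r \<le> TB - money s" and NR: "(lwb s l r \<longrightarrow> (\<forall>g|\<in>|XL. \<forall>s'\<in>lt s l r. \<not> lwin TB g s')) \<and>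
          (\<not> lwb s l r \<longrightarrow> (\<exists>g|\<in>|XR. \<exists>s'\<in>rt s l r. \<not> lwin TB g s'))"
        using N l unfolding lwin_char[of TB ?X s] game.sel by blast
      show False
      proof (cases "lwb s l r")
        case True
        then obtain g s' where g: "g |\<in>| lopts (gsum P ?X)" "s' \<in> lt s l r" "lwin TB g s'" using SH rs by blast
        from g(1) consider (a) h where "h |\<in>| lopts P" "g = gsum h ?X" | (b) x where "x |\<in>| XL" "g = gsum P x"
          using lopts_gsum by auto
        then show False
        proof cases
          case a
          have "le_st s' s" using L1 le_refl g by blast
          then show False using a L g N unfolding negv_def by blast
        next
          case b
          then show False using Game.IH(1) g NR True by blast
        qed
      next
        case False
        then obtain x s' where x: "x |\<in>| XR" "s' \<in> rt s l r" "\<not> lwin TB x s'" using NR by blast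
        have "gsum P x |\<in>| ropts (gsum P ?X)" using x ropts_gsum by auto
        then have "lwin TB (gsum P x) s'" using SH rs False x by blast
        then show False using Game.IH(2) x by blast
      qed
    qed
  qed
  then show ?thesis unfolding le0_def by blast
qed

lemma lemD:
  assumes tPR: "PR |\<in>| ropts P" and tle: "le0 TB PR" and L: "\<forall>g|\<in>|lopts P. negv TB g"
  shows "negv TB P"
proof -
  have "lwin TB (gsum P X) t \<Longrightarrow> le_st t s \<Longrightarrow> lwin TB X s" for X s t
  proof (induction X arbitrary: s t rule: game.induct)
    case (Game XL XR)
    let ?X = "Game XL XR"
    from Game.prems(1)[unfolded lwin_char[of TB "gsum P ?X" t]] obtain l where l: "l \<le> money t" and SH: "\<forall>r\<le>TB - money t.
          (lwb t l r \<longrightarrow> (\<exists>g|\<in>|lopts (gsum P ?X). \<exists>s'\<in>lt t l r. lwin TB g s')) \<and>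
          (\<not> lwb t l r \<longrightarrow> (\<forall>g|\<in>|ropts (gsum P ?X). \<forall>s'\<in>rt t l r. lwin TB g s'))"
      by blast
    have mm: "money t \<le> money s" using money_le Game.prems(2) by blast
    show ?case
    proof (rule ccontr)
      assume N: "\<not> lwin TB ?X s"
      have ls: "l \<le> money s" using l mm by simp
      obtain r where rs: "r \<le> TB - money s" and NR: "(lwb s l r \<longrightarrow> (\<forall>g|\<in>|XL. \<forall>s'\<in>lt s l r. \<not> lwin TB g s')) \<and>
          (\<not> lwb s l r \<longrightarrow> (\<exists>g|\<in>|XR. \<exists>s'\<in>rt s l r. \<not> lwin TB g s'))"
        using N ls unfolding lwin_char[of TB ?X s] game.sel by blast
      have rt: "r \<le> TB - money t" using rs mm by linarith
      show False
      proof (cases "lwb s l r")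
        case True
        note sT = True
        show False
        proof (cases "lwb t l r")
          case True
          then obtain g t' where g: "g |\<in>| lopts (gsum P ?X)" "t' \<in> lt t l r" "lwin TB g t'" using SH rt by blast
          from g(1) consider (a) h where "h |\<in>| lopts P" "g = gsum h ?X" | (b) x where "x |\<in>| XL" "g = gsum P x"
            using lopts_gsum by auto
          then show False
          proof cases
            case a
            have "le_st t' s" using L1 Game.prems(2) g by blast
            then show False using a L g N unfolding negv_def by blast
          next
            case b
            obtain s' where "s' \<in> lt s l r" "le_st t' s'" using T2d Game.prems(2) True g by blast
            then show False using Game.IH(1) g NR sT b by blast
          qed
        next
          case False
          then obtain p q where pq: "t = Plain q" "s = Hat p" "r = l" "q \<le> p"
            using tieD Game.prems(2) sT by blast
          show False
          proof (cases "l = 0")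
            case True
            have "PR |\<in>| ropts P" by (rule tPR)
            then have "gsum PR ?X |\<in>| ropts (gsum P ?X)" using ropts_gsum by auto
            moreover have "Hat q \<in> rt t 0 0" using pq by simp
            moreover have "\<not> lwb t 0 0" using pq by simp
            ultimately have "lwin TB (gsum PR ?X) (Hat q)" using SH True by fastforce
            then have "lwin TB ?X (Hat q)" using tle unfolding le0_def by blast
            then have "lwin TB ?X s" using lwin_M pq by fastforce
            then show False using N by blast
          next
            case False
            have "l - 1 \<le> TB - money t" using rt pq by simp
            moreover have "lwb t l (l - 1)" using pq False by simp
            ultimately obtain g t' where g: "g |\<in>| lopts (gsum P ?X)" "t' \<in> lt t l (l - 1)" "lwin TB g t'" using SH by blast
            have tq: "t' = Plain (q - l)" using g pq by simp
            from g(1) consider (a) h where "h |\<in>| lopts P" "g = gsum h ?X" | (b) x where "x |\<in>| XL" "g = gsum P x"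
              using lopts_gsum by auto
            then show False
            proof cases
              case a
              have "le_st t' s" using tq pq by simp
              then show False using a L g N unfolding negv_def by blast
            next
              case b
              have "Plain (p - l) \<in> lt s l r" using pq by simp
              moreover have "le_st t' (Plain (p - l))" using tq pq by simp
              ultimately show False using Game.IH(1) g NR sT b by blast
            qed
          qed
        qed
      next
        case False
        then have nlt: "\<not> lwb t l r" using lwb_mono Game.prems(2) by blast
        obtain x s' where x: "x |\<in>| XR" "s' \<in> rt s l r" "\<not> lwin TB x s'" using NR False by blast
        obtain t' where t': "t' \<in> rt t l r" "le_st t' s'" using T3d Game.prems(2) False x by blast
        have "gsum P x |\<in>| ropts (gsum P ?X)" using x ropts_gsum by auto
        then have "lwin TB (gsum P x) t'" using SH rt nlt t' by blast
        then show False using Game.IH(2) x t' by blast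
      qed
    qed
  qed
  then show ?thesis unfolding negv_def by blast
qed


lemma lopts_gsum_eq: "lopts (gsum A B) = (\<lambda>g. gsum g B) |`| lopts A |\<union>| gsum A |`| lopts B"
  by (subst gsum_eq) simp
lemma ropts_gsum_eq: "ropts (gsum A B) = (\<lambda>g. gsum g B) |`| ropts A |\<union>| gsum A |`| ropts B"
  by (subst gsum_eq) simp

lemma pos_dy: "pos TB (dyadic j)"
proof (induction j)
  case 0
  show ?case by (rule lemC[of g_zero]) (simp_all add: dy_opts ge0_zero)
next
  case (Suc j)
  show ?case by (rule lemC[of g_zero]) (simp_all add: dy_opts ge0_zero Suc)
qed

lemma negv_cdy: "negv TB (conjugate (dyadic j))"
proof (induction j)
  case 0
  show ?case by (rule lemD[of g_zero]) (simp_all add: cdy_opts le0_zero)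
next
  case (Suc j)
  show ?case by (rule lemD[of g_zero]) (simp_all add: cdy_opts le0_zero Suc)
qed

lemma pos_one[simp]: "pos TB g_one" using pos_dy[of TB 0] by simp
lemma negv_cone[simp]: "negv TB (conjugate g_one)" using negv_cdy[of TB 0] by simp

abbreviation GG where "GG k \<equiv> gsum (dyadic k) (conjugate (dyadic k))"

lemma chain: "ge0 TB (GG k) \<and> le0 TB (GG k) \<and> (\<forall>j<k. pos TB (gsum (dyadic j) (conjugate (dyadic k))))
   \<and> (\<forall>j<k. negv TB (gsum (dyadic k) (conjugate (dyadic j))))"
proof (induction k)
  case 0
  have "ge0 TB (GG 0)"
    by (rule lemA) (simp del: dyadic.simps conjugate.simps gsum.simps add: ropts_gsum_eq dy_opts cdy_opts gsum_zero_right pos_dy)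
  moreover have "le0 TB (GG 0)"
    by (rule lemB) (simp del: dyadic.simps conjugate.simps gsum.simps add: lopts_gsum_eq dy_opts cdy_opts gsum_zero_left negv_cdy)
  ultimately show ?case by simp
next
  case (Suc m)
  note IHm = Suc.IH
  have P1: "pos TB (gsum (dyadic j) (conjugate (dyadic (Suc m))))" if "j \<le> m" for j
    using that
  proof (induction j)
    case 0
    have t: "ge0 TB (gsum (dyadic 0) (conjugate (dyadic m)))"
    proof (cases "m = 0")
      case True then show ?thesis using IHm by (simp del: dyadic.simps conjugate.simps gsum.simps)
    next
      case False then have "0 < m" by simp
      then show ?thesis using IHm pos_ge0 by blast
    qed
    show ?case
      by (rule lemC[OF _ t]) (simp_all del: dyadic.simps conjugate.simps gsum.simps add: lopts_gsum_eq ropts_gsum_eq dy_opts cdy_opts gsum_zero_right pos_dy)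
  next
    case (Suc i)
    have t: "ge0 TB (gsum (dyadic (Suc i)) (conjugate (dyadic m)))"
    proof (cases "Suc i = m")
      case True then show ?thesis using IHm by (simp del: dyadic.simps conjugate.simps gsum.simps)
    next
      case False then have "Suc i < m" using Suc.prems by simp
      then show ?thesis using IHm pos_ge0 by blast
    qed
    have ih: "pos TB (gsum (dyadic i) (conjugate (dyadic (Suc m))))" using Suc.IH Suc.prems by (simp del: dyadic.simps conjugate.simps gsum.simps)
    show ?case
      by (rule lemC[OF _ t]) (simp_all del: dyadic.simps conjugate.simps gsum.simps add: lopts_gsum_eq ropts_gsum_eq dy_opts cdy_opts gsum_zero_right pos_dy ih)
  qed
  have P2: "negv TB (gsum (dyadic (Suc m)) (conjugate (dyadic j)))" if "j \<le> m" for j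
    using that
  proof (induction j)
    case 0
    have t: "le0 TB (gsum (dyadic m) (conjugate (dyadic 0)))"
    proof (cases "m = 0")
      case True then show ?thesis using IHm by (simp del: dyadic.simps conjugate.simps gsum.simps)
    next
      case False then have "0 < m" by simp
      then show ?thesis using IHm negv_le0 by blast
    qed
    show ?case
      by (rule lemD[OF _ t]) (simp_all del: dyadic.simps conjugate.simps gsum.simps add: lopts_gsum_eq ropts_gsum_eq dy_opts cdy_opts gsum_zero_left negv_cdy)
  next
    case (Suc i)
    have t: "le0 TB (gsum (dyadic m) (conjugate (dyadic (Suc i))))"
    proof (cases "Suc i = m")
      case True then show ?thesis using IHm by (simp del: dyadic.simps conjugate.simps gsum.simps)
    next
      case False then have "Suc i < m" using Suc.prems by simp
      then show ?thesis using IHm negv_le0 by blast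
    qed
    have ih: "negv TB (gsum (dyadic (Suc m)) (conjugate (dyadic i)))" using Suc.IH Suc.prems by (simp del: dyadic.simps conjugate.simps gsum.simps)
    show ?case
      by (rule lemD[OF _ t]) (simp_all del: dyadic.simps conjugate.simps gsum.simps add: lopts_gsum_eq ropts_gsum_eq dy_opts cdy_opts gsum_zero_left negv_cdy ih)
  qed
  have "ge0 TB (GG (Suc m))"
    by (rule lemA) (simp del: dyadic.simps conjugate.simps gsum.simps add: ropts_gsum_eq dy_opts cdy_opts gsum_zero_right pos_dy P1)
  moreover have "le0 TB (GG (Suc m))"
    by (rule lemB) (simp del: dyadic.simps conjugate.simps gsum.simps add: lopts_gsum_eq dy_opts cdy_opts gsum_zero_left negv_cdy P2)
  moreover have "\<forall>j<Suc m. pos TB (gsum (dyadic j) (conjugate (dyadic (Suc m))))" using P1 by simp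
  moreover have "\<forall>j<Suc m. negv TB (gsum (dyadic (Suc m)) (conjugate (dyadic j)))" using P2 by simp
  ultimately show ?case by blast
qed

theorem mainTheorem17:
  fixes TB k :: nat
  assumes "k \<ge> 1"
  shows "game_eq TB (gsum (dyadic k) (conjugate (dyadic k))) g_zero"
proof -
  have a: "ge0 TB (GG k)" and b: "le0 TB (GG k)" using chain by blast+
  have 1: "game_ge TB (GG k) g_zero"
    unfolding game_ge_def
  proof (intro allI ballI)
    fix X s
    have "lwin TB X s \<Longrightarrow> lwin TB (gsum (GG k) X) s" using a unfolding ge0_def by blast
    then show "outcome_ge (outcome TB (gsum (GG k) X) s) (outcome TB (gsum g_zero X) s)"
      unfolding outcome_def outcome_ge_def gsum_zero_left by (cases "lwin TB X s") simp_all
  qed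
  have 2: "game_ge TB g_zero (GG k)"
    unfolding game_ge_def
  proof (intro allI ballI)
    fix X s
    have "lwin TB (gsum (GG k) X) s \<Longrightarrow> lwin TB X s" using b unfolding le0_def by blast
    then show "outcome_ge (outcome TB (gsum g_zero X) s) (outcome TB (gsum (GG k) X) s)"
      unfolding outcome_def outcome_ge_def gsum_zero_left by (cases "lwin TB (gsum (GG k) X) s") simp_all
  qed
  show ?thesis unfolding game_eq_def using 1 2 by blast
qed

end
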